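(* Let $0<p_0<p_1\le\infty$ and $0<q_0<q_1\le\infty$. Then for all $n\ge1$ $$b_n\big(\ell^{q_0}(\ell^{p_0})\hookrightarrow\ell^{q_1}(\ell^{p_1})\big)\le n^{-\min\left(\frac1{p_0},\frac1{q_0}\right)\left(1-\max\left(\frac{q_0}{q_1},\frac{p_0}{p_1}\right)\right)}.$$ In particular, the embedding $\ell^{q_0}(\ell^{p_0})\hookrightarrow\ell^{q_1}(\ell^{p_1})$ is finitely strictly singular.
   Context: For quasi-normed spaces $X_j$ and $q\in(0,\infty]$, $\ell^q(X_j)_{j=0}^\infty$ is the space of sequences $x=(x_j)_{j\ge0}$, $x_j\in X_j$, with $\|x\|=(\sum_j\|x_j\|_{X_j}^q)^{1/q}<\infty$ (supremum if $q=\infty$); $\ell^q(\ell^p)$ is the case $X_j=\ell^p=\ell^p(\mathbb{N})$ for all $j$. Bernstein numbers of a bounded linear $T:X\to Y$ between quasi-Banach spaces: $b_n(T)=\sup\{\inf_{x\in X_n,\|x\|_X=1}\|Tx\|_Y:X_n\subseteq X,\ \dim X_n=n\}$; $T$ is finitely strictly singular if $b_n(T)\to0$. *)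

theory Defs
  imports "HOL-Analysis.Analysis" "HOL-Library.Function_Algebras"
begin

text \<open>Scalar field: real. Sequences in ell^p are functions nat to real,
 elements of ell^q(ell^p) are functions nat to (nat to real), x j being the j-th block.\<close>

definition in_lp :: "ereal \<Rightarrow> (nat \<Rightarrow> real) \<Rightarrow> bool" where
  "in_lp p x = (if p = \<infinity> then bdd_above (range (\<lambda>i. \<bar>x i\<bar>))
                else summable (\<lambda>i. \<bar>x i\<bar> powr real_of_ereal p))"

definition lp_norm :: "ereal \<Rightarrow> (nat \<Rightarrow> real) \<Rightarrow> real" where
  "lp_norm p x = (if p = \<infinity> then (SUP i. \<bar>x i\<bar>)
                  else (\<Sum>i. \<bar>x i\<bar> powr real_of_ereal p) powr (1 / real_of_ereal p))"

definition in_mixed :: "ereal \<Rightarrow> ereal \<Rightarrow> (nat \<Rightarrow> nat \<Rightarrow> real) \<Rightarrow> bool" where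
  "in_mixed q p x = ((\<forall>j. in_lp p (x j)) \<and> in_lp q (\<lambda>j. lp_norm p (x j)))"

definition mixed_norm :: "ereal \<Rightarrow> ereal \<Rightarrow> (nat \<Rightarrow> nat \<Rightarrow> real) \<Rightarrow> real" where
  "mixed_norm q p x = lp_norm q (\<lambda>j. lp_norm p (x j))"

definition scl :: "real \<Rightarrow> (nat \<Rightarrow> nat \<Rightarrow> real) \<Rightarrow> (nat \<Rightarrow> nat \<Rightarrow> real)" where
  "scl c f = (\<lambda>j i. c * f j i)"

lemma vector_space_scl: "vector_space scl"
  by unfold_locales (auto simp: scl_def fun_eq_iff algebra_simps)

text \<open>Bernstein numbers of T : X \<rightarrow> Y, X given as a subset (a linear subspace) of the
 ambient vector space with quasi-norm nX, nY the quasi-norm of Y.\<close>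
definition bernstein :: "((nat \<Rightarrow> nat \<Rightarrow> real) \<Rightarrow> bool) \<Rightarrow> ((nat \<Rightarrow> nat \<Rightarrow> real) \<Rightarrow> real)
   \<Rightarrow> ((nat \<Rightarrow> nat \<Rightarrow> real) \<Rightarrow> real) \<Rightarrow> ((nat \<Rightarrow> nat \<Rightarrow> real) \<Rightarrow> (nat \<Rightarrow> nat \<Rightarrow> real))
   \<Rightarrow> nat \<Rightarrow> ereal" where
  "bernstein X nX nY T n =
     (SUP V \<in> {V. module.subspace scl V \<and> V \<subseteq> Collect X \<and> vector_space.dim scl V = n}.
        (INF x \<in> {x \<in> V. nX x = 1}. ereal (nY (T x))))"

end

theory Submission
  imports Defs
begin


lemma lp_norm_fin: "lp_norm (ereal p) u = (\<Sum>i. \<bar>u i\<bar> powr p) powr (1 / p)"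
  by (simp add: lp_norm_def)

lemma term_le_suminf:
  fixes f :: "nat \<Rightarrow> real"
  assumes "summable f" "\<And>i. 0 \<le> f i"
  shows "f i \<le> suminf f"
  using sum_le_suminf[OF assms(1), of "{i}"] assms(2) by auto

lemma abs_le_lp:
  assumes p: "0 < p" and s: "summable (\<lambda>i. \<bar>u i\<bar> powr p)"
  shows "\<bar>u i\<bar> \<le> lp_norm (ereal p) u"
proof -
  have "\<bar>u i\<bar> powr p \<le> (\<Sum>i. \<bar>u i\<bar> powr p)"
    by (rule term_le_suminf[OF s]) simp
  then have "(\<bar>u i\<bar> powr p) powr (1/p) \<le> (\<Sum>i. \<bar>u i\<bar> powr p) powr (1/p)"
    by (intro powr_mono2) (use p in auto)
  then show ?thesis using p by (simp add: lp_norm_fin powr_powr)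
qed

lemma lp_norm_nonneg_fin: "0 \<le> lp_norm (ereal p) u"
  by (simp add: lp_norm_fin)

lemma lp_hom:
  assumes p: "0 < p" and s: "summable (\<lambda>i. \<bar>u i\<bar> powr p)"
  shows "lp_norm (ereal p) (\<lambda>i. c * u i) = \<bar>c\<bar> * lp_norm (ereal p) u"
proof -
  have "(\<Sum>i. \<bar>c * u i\<bar> powr p) = (\<Sum>i. \<bar>c\<bar> powr p * \<bar>u i\<bar> powr p)"
    by (simp add: abs_mult powr_mult)
  also have "\<dots> = \<bar>c\<bar> powr p * (\<Sum>i. \<bar>u i\<bar> powr p)"
    by (rule suminf_mult[OF s])
  finally have e: "(\<Sum>i. \<bar>c * u i\<bar> powr p) = \<bar>c\<bar> powr p * (\<Sum>i. \<bar>u i\<bar> powr p)" .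
  have "(\<bar>c\<bar> powr p * (\<Sum>i. \<bar>u i\<bar> powr p)) powr (1/p)
        = (\<bar>c\<bar> powr p) powr (1/p) * (\<Sum>i. \<bar>u i\<bar> powr p) powr (1/p)"
    using suminf_nonneg[OF s] by (simp add: powr_mult)
  also have "(\<bar>c\<bar> powr p) powr (1/p) = \<bar>c\<bar>"
    using p by (simp add: powr_powr)
  finally show ?thesis by (simp add: lp_norm_fin e)
qed

lemma lp_hom_summable:
  fixes u :: "nat \<Rightarrow> real" and p c :: real
  assumes s: "summable (\<lambda>i. \<bar>u i\<bar> powr p)"
  shows "summable (\<lambda>i. \<bar>c * u i\<bar> powr p)"
proof -
  have "summable (\<lambda>i. \<bar>c\<bar> powr p * \<bar>u i\<bar> powr p)"
    by (rule summable_mult[OF s])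
  moreover have "(\<lambda>i. \<bar>c * u i\<bar> powr p) = (\<lambda>i. \<bar>c\<bar> powr p * \<bar>u i\<bar> powr p)"
    by (rule ext) (simp add: abs_mult powr_mult)
  ultimately show ?thesis by simp
qed



lemma inner_bound:
  fixes u :: "nat \<Rightarrow> real" and p0 M \<theta> :: real and p1 :: ereal
  assumes p0: "0 < p0" "ereal p0 < p1" and s: "summable (\<lambda>i. \<bar>u i\<bar> powr p0)"
    and M: "0 \<le> M" "\<And>i. \<bar>u i\<bar> \<le> M"
    and th: "real_of_ereal (ereal p0 / p1) \<le> \<theta>" "\<theta> < 1"
  shows "0 \<le> lp_norm p1 u \<and> lp_norm p1 u \<le> M powr (1-\<theta>) * lp_norm (ereal p0) u powr \<theta>"
proof -
  define a where "a = lp_norm (ereal p0) u"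
  define m where "m = min M a"
  define sx where "sx = real_of_ereal (ereal p0 / p1)"
  have a0: "0 \<le> a" unfolding a_def by (rule lp_norm_nonneg_fin)
  have um: "\<bar>u i\<bar> \<le> m" for i
    unfolding m_def a_def using M(2)[of i] abs_le_lp[OF p0(1) s, of i] by simp
  have m0: "0 \<le> m" using M(1) a0 by (simp add: m_def)
  have rhs0: "0 \<le> M powr (1-\<theta>) * a powr \<theta>" by simp
  show ?thesis
  proof (cases "m = 0")
    case True
    then have u0: "u i = 0" for i using um[of i] by simp
    have "lp_norm p1 u = 0"
      by (simp add: lp_norm_def u0)
    then show ?thesis using rhs0 by (simp add: a_def)
  next
    case False
    with m0 have mpos: "0 < m" by simp
    then have apos: "0 < a" by (simp add: m_def)
    have key: "0 \<le> lp_norm p1 u \<and> lp_norm p1 u \<le> m powr (1 - sx) * a powr sx \<and> 0 \<le> sx"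
    proof (cases p1)
      case PInf
      then have sx0: "sx = 0" by (simp add: sx_def)
      have bdd: "bdd_above (range (\<lambda>i. \<bar>u i\<bar>))" using um by (intro bdd_aboveI2) 
      have "lp_norm p1 u = (SUP i. \<bar>u i\<bar>)" using PInf by (simp add: lp_norm_def)
      moreover have "(SUP i. \<bar>u i\<bar>) \<le> m" by (rule cSUP_least) (auto intro: um)
      moreover have "\<bar>u 0\<bar> \<le> (SUP i. \<bar>u i\<bar>)" by (rule cSUP_upper[OF _ bdd]) simp
      ultimately show ?thesis using sx0 apos m0 by (simp add: powr_one)
    next
      case MInf
      then show ?thesis using p0 by simp
    next
      case (real P)
      with p0 have P: "p0 < P" by simp
      with p0 have Ppos: "0 < P" by simp
      have sxe: "sx = p0 / P" using real Ppos by (simp add: sx_def)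
      have le1: "\<bar>u i\<bar> powr P \<le> m powr (P - p0) * \<bar>u i\<bar> powr p0" for i
      proof -
        have "\<bar>u i\<bar> powr P = \<bar>u i\<bar> powr (P - p0) * \<bar>u i\<bar> powr p0"
          by (simp add: powr_add[symmetric])
        also have "\<dots> \<le> m powr (P - p0) * \<bar>u i\<bar> powr p0"
          by (intro mult_right_mono powr_mono2) (use P um in auto)
        finally show ?thesis .
      qed
      have s2: "summable (\<lambda>i. m powr (P - p0) * \<bar>u i\<bar> powr p0)"
        by (rule summable_mult[OF s])
      have sP: "summable (\<lambda>i. \<bar>u i\<bar> powr P)"
        by (rule summable_comparison_test[OF _ s2]) (use le1 in auto)
      have S0: "(\<Sum>i. \<bar>u i\<bar> powr p0) = a powr p0"
        using p0(1) suminf_nonneg[OF s] by (simp add: a_def lp_norm_fin powr_powr)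
      have "(\<Sum>i. \<bar>u i\<bar> powr P) \<le> (\<Sum>i. m powr (P - p0) * \<bar>u i\<bar> powr p0)"
        by (rule suminf_le[OF le1 sP s2])
      also have "\<dots> = m powr (P - p0) * a powr p0"
        using suminf_mult[OF s, of "m powr (P - p0)"] S0 by simp
      finally have sle: "(\<Sum>i. \<bar>u i\<bar> powr P) \<le> m powr (P - p0) * a powr p0" .
      have "lp_norm p1 u = (\<Sum>i. \<bar>u i\<bar> powr P) powr (1/P)" using real by (simp add: lp_norm_def)
      also have "\<dots> \<le> (m powr (P - p0) * a powr p0) powr (1/P)"
        by (intro powr_mono2 sle) (use Ppos sP in \<open>auto intro: suminf_nonneg\<close>)
      also have "\<dots> = m powr ((P - p0)/P) * a powr (p0/P)"
        by (simp add: powr_mult powr_powr)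
      also have "(P - p0)/P = 1 - sx" using Ppos by (simp add: sxe field_simps)
      finally show ?thesis using sxe p0 Ppos real by (simp add: lp_norm_def)
    qed
    have "m powr (1 - sx) * a powr sx = m powr (1 - \<theta>) * (m powr (\<theta> - sx) * a powr sx)"
      by (simp add: powr_add[symmetric])
    also have "\<dots> \<le> m powr (1 - \<theta>) * (a powr (\<theta> - sx) * a powr sx)"
      by (intro mult_left_mono mult_right_mono powr_mono2)
         (use th key m0 in \<open>auto simp: sx_def m_def\<close>)
    also have "\<dots> = m powr (1 - \<theta>) * a powr \<theta>"
      by (simp add: powr_add[symmetric])
    also have "\<dots> \<le> M powr (1 - \<theta>) * a powr \<theta>"
      by (intro mult_right_mono powr_mono2) (use th m0 in \<open>auto simp: m_def\<close>)
    finally show ?thesis using key by (simp add: a_def)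
  qed
qed

lemma outer_bound:
  fixes b a :: "nat \<Rightarrow> real" and q0 C \<theta> :: real and q1 :: ereal
  assumes q0: "0 < q0" "ereal q0 < q1" and th: "real_of_ereal (ereal q0 / q1) \<le> \<theta>" "0 \<le> \<theta>"
    and C: "0 \<le> C"
    and b: "\<And>j. 0 \<le> b j" "\<And>j. b j \<le> C * a j powr \<theta>"
    and a: "\<And>j. 0 \<le> a j" "\<And>j. a j \<le> 1"
    and sa: "summable (\<lambda>j. a j powr q0)" "(\<Sum>j. a j powr q0) \<le> 1"
  shows "0 \<le> lp_norm q1 b \<and> lp_norm q1 b \<le> C"
proof -
  have bC: "b j \<le> C" for j
  proof -
    have "a j powr \<theta> \<le> 1" by (rule powr_le1) (use th a[of j] in auto)
    then have "C * a j powr \<theta> \<le> C" using C by (simp add: mult_left_le)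
    then show ?thesis using b(2)[of j] by simp
  qed
  show ?thesis
  proof (cases q1)
    case PInf
    have bdd: "bdd_above (range b)" using bC by (intro bdd_aboveI2) 
    have "lp_norm q1 b = (SUP j. b j)" using PInf b(1) by (simp add: lp_norm_def)
    moreover have "(SUP j. b j) \<le> C" by (rule cSUP_least) (auto intro: bC)
    moreover have "b 0 \<le> (SUP j. b j)" by (rule cSUP_upper[OF _ bdd]) simp
    ultimately show ?thesis using b(1)[of 0] by simp
  next
    case MInf
    then show ?thesis using q0 by simp
  next
    case (real Q)
    with q0 have Q: "q0 < Q" by simp
    with q0 have Qpos: "0 < Q" by simp
    have thQ: "q0 \<le> \<theta> * Q" using th(1) real Qpos by (simp add: field_simps)
    have le1: "b j powr Q \<le> C powr Q * a j powr q0" for j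
    proof -
      have "b j powr Q \<le> (C * a j powr \<theta>) powr Q"
        by (intro powr_mono2) (use Qpos b in auto)
      also have "\<dots> = C powr Q * a j powr (\<theta> * Q)"
        by (simp add: powr_mult powr_powr)
      also have "\<dots> \<le> C powr Q * a j powr q0"
        by (intro mult_left_mono powr_mono') (use thQ a in auto)
      finally show ?thesis .
    qed
    have s2: "summable (\<lambda>j. C powr Q * a j powr q0)" by (rule summable_mult[OF sa(1)])
    have sb: "summable (\<lambda>j. b j powr Q)"
      by (rule summable_comparison_test[OF _ s2]) (use le1 in auto)
    have "(\<Sum>j. b j powr Q) \<le> (\<Sum>j. C powr Q * a j powr q0)"
      by (rule suminf_le[OF le1 sb s2])
    also have "\<dots> = C powr Q * (\<Sum>j. a j powr q0)" by (rule suminf_mult[OF sa(1)])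
    also have "\<dots> \<le> C powr Q" using sa(2) by (simp add: mult_left_le)
    finally have sle: "(\<Sum>j. b j powr Q) \<le> C powr Q" .
    have "lp_norm q1 b = (\<Sum>j. b j powr Q) powr (1/Q)" using real b(1) by (simp add: lp_norm_def)
    also have "\<dots> \<le> (C powr Q) powr (1/Q)"
      by (intro powr_mono2 sle) (use Qpos sb in \<open>auto intro: suminf_nonneg\<close>)
    also have "\<dots> = C" using Qpos C by (simp add: powr_powr)
    finally show ?thesis using real by (simp add: lp_norm_def)
  qed
qed



lemma ratio_bounds:
  fixes p0 :: real and p1 :: ereal
  assumes "0 < p0" "ereal p0 < p1"
  shows "0 \<le> real_of_ereal (ereal p0 / p1) \<and> real_of_ereal (ereal p0 / p1) < 1"
  using assms by (cases p1) auto

lemma finite_ge_summable: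
  fixes f :: "nat \<Rightarrow> real"
  assumes "summable f" "0 < d"
  shows "finite {n. d \<le> f n}"
proof -
  have "f \<longlonglongrightarrow> 0" by (rule summable_LIMSEQ_zero[OF assms(1)])
  then have "eventually (\<lambda>n. f n < d) sequentially"
    using assms(2) by (auto dest: order_tendstoD(2))
  then obtain N where "\<And>n. n \<ge> N \<Longrightarrow> f n < d" by (auto simp: eventually_sequentially)
  then have "{n. d \<le> f n} \<subseteq> {..<N}" by (auto simp: not_le[symmetric])
  then show ?thesis by (rule finite_subset) simp
qed

lemma in_mixed_fin:
  "in_mixed (ereal q) (ereal p) x \<longleftrightarrow> (\<forall>j. summable (\<lambda>i. \<bar>x j i\<bar> powr p))
     \<and> summable (\<lambda>j. \<bar>lp_norm (ereal p) (x j)\<bar> powr q)"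
  by (simp add: in_mixed_def in_lp_def)

lemma mixed_norm_fin:
  "mixed_norm (ereal q) (ereal p) x = (\<Sum>j. lp_norm (ereal p) (x j) powr q) powr (1/q)"
  by (simp add: mixed_norm_def lp_norm_fin lp_norm_nonneg_fin)

lemma c0_prop:
  assumes p: "0 < p" and q: "0 < q" and x: "in_mixed (ereal q) (ereal p) x" and d: "0 < d"
  shows "finite {k. d \<le> \<bar>x (fst k) (snd k)\<bar>}"
proof -
  have sj: "summable (\<lambda>i. \<bar>x j i\<bar> powr p)" for j using x by (simp add: in_mixed_fin)
  have sa: "summable (\<lambda>j. lp_norm (ereal p) (x j) powr q)"
    using x by (simp add: in_mixed_fin lp_norm_nonneg_fin)
  define J where "J = {j. d powr q \<le> lp_norm (ereal p) (x j) powr q}"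
  have fJ: "finite J" unfolding J_def by (rule finite_ge_summable[OF sa]) (use d in simp)
  have fI: "finite {i. d powr p \<le> \<bar>x j i\<bar> powr p}" for j
    by (rule finite_ge_summable[OF sj]) (use d in simp)
  have "{k. d \<le> \<bar>x (fst k) (snd k)\<bar>} \<subseteq> Sigma J (\<lambda>j. {i. d powr p \<le> \<bar>x j i\<bar> powr p})"
  proof clarsimp
    fix j i assume h: "d \<le> \<bar>x j i\<bar>"
    have "\<bar>x j i\<bar> \<le> lp_norm (ereal p) (x j)" by (rule abs_le_lp[OF p sj])
    then have "d powr q \<le> lp_norm (ereal p) (x j) powr q"
      using h d q by (intro powr_mono2) auto
    moreover have "d powr p \<le> \<bar>x j i\<bar> powr p" using h d p by (intro powr_mono2) auto
    ultimately show "j \<in> J \<and> d powr p \<le> \<bar>x j i\<bar> powr p" by (simp add: J_def)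
  qed
  then show ?thesis by (rule finite_subset) (use fJ fI in auto)
qed

lemma mixed_hom:
  assumes p: "0 < p" and q: "0 < q" and x: "in_mixed (ereal q) (ereal p) x"
  shows "mixed_norm (ereal q) (ereal p) (scl c x) = \<bar>c\<bar> * mixed_norm (ereal q) (ereal p) x"
proof -
  have sj: "summable (\<lambda>i. \<bar>x j i\<bar> powr p)" for j using x by (simp add: in_mixed_fin)
  have sa: "summable (\<lambda>j. \<bar>lp_norm (ereal p) (x j)\<bar> powr q)"
    using x by (simp add: in_mixed_fin)
  have "(\<lambda>j. lp_norm (ereal p) (scl c x j)) = (\<lambda>j. \<bar>c\<bar> * lp_norm (ereal p) (x j))"
    by (rule ext) (simp add: scl_def lp_hom[OF p sj])
  then show ?thesis
    by (simp add: mixed_norm_def lp_hom[OF q sa])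
qed

lemma ybound:
  fixes p0 q0 M :: real and p1 q1 :: ereal
  assumes p: "0 < p0" "ereal p0 < p1" and q: "0 < q0" "ereal q0 < q1"
    and z: "in_mixed (ereal q0) (ereal p0) z" "mixed_norm (ereal q0) (ereal p0) z = 1"
    and M: "0 \<le> M" "\<And>j i. \<bar>z j i\<bar> \<le> M"
  shows "0 \<le> mixed_norm q1 p1 z \<and> mixed_norm q1 p1 z \<le>
     M powr (1 - max (real_of_ereal (ereal q0 / q1)) (real_of_ereal (ereal p0 / p1)))"
proof -
  define \<theta> where "\<theta> = max (real_of_ereal (ereal q0 / q1)) (real_of_ereal (ereal p0 / p1))"
  have th: "0 \<le> \<theta>" "\<theta> < 1" "real_of_ereal (ereal q0 / q1) \<le> \<theta>" "real_of_ereal (ereal p0 / p1) \<le> \<theta>"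
    using ratio_bounds[OF p] ratio_bounds[OF q] by (auto simp: \<theta>_def)
  define a where "a j = lp_norm (ereal p0) (z j)" for j
  have a0: "0 \<le> a j" for j by (simp add: a_def lp_norm_nonneg_fin)
  have sj: "summable (\<lambda>i. \<bar>z j i\<bar> powr p0)" for j using z by (simp add: in_mixed_fin)
  have sa: "summable (\<lambda>j. a j powr q0)"
    using z by (simp add: in_mixed_fin lp_norm_nonneg_fin a_def)
  define S where "S = (\<Sum>j. a j powr q0)"
  have S0: "0 \<le> S" unfolding S_def by (rule suminf_nonneg[OF sa]) simp
  have "S powr (1/q0) = 1" using z(2) by (simp add: mixed_norm_fin S_def a_def)
  then have "(S powr (1/q0)) powr q0 = 1" by simp
  then have S1: "S = 1" using S0 q by (simp add: powr_powr)
  have a1: "a j \<le> 1" for j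
  proof (rule ccontr)
    assume "\<not> a j \<le> 1"
    then have "1 powr q0 < a j powr q0" using q by (intro powr_less_mono2) auto
    moreover have "a j powr q0 \<le> S" unfolding S_def by (rule term_le_suminf[OF sa]) simp
    ultimately show False using S1 by simp
  qed
  have ib: "0 \<le> lp_norm p1 (z j) \<and> lp_norm p1 (z j) \<le> M powr (1-\<theta>) * a j powr \<theta>" for j
    unfolding a_def by (rule inner_bound[OF p sj M(1) M(2) th(4) th(2)])
  have "0 \<le> lp_norm q1 (\<lambda>j. lp_norm p1 (z j)) \<and> lp_norm q1 (\<lambda>j. lp_norm p1 (z j)) \<le> M powr (1-\<theta>)"
    by (rule outer_bound[OF q th(3) th(1) _ _ _ a0 a1 sa]) (use ib S1 in \<open>auto simp: S_def\<close>)
  then show ?thesis by (simp add: mixed_norm_def \<theta>_def)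
qed



lemma powr_sum_lower:
  fixes c :: "nat \<Rightarrow> nat" and r :: real
  assumes J: "finite J" and r: "0 < r" and c1: "\<And>j. j \<in> J \<Longrightarrow> 1 \<le> c j"
    and cn: "(\<Sum>j\<in>J. c j) = n" and n: "1 \<le> n"
  shows "real n powr (min 1 r) \<le> (\<Sum>j\<in>J. real (c j) powr r)"
proof -
  define m where "m = min 1 r"
  have cle: "c j \<le> n" if "j \<in> J" for j
    using member_le_sum[of j J c] J that cn by simp
  have trm: "real (c j) * real n powr (m - 1) \<le> real (c j) powr r" if j: "j \<in> J" for j
  proof (cases "1 \<le> r")
    case True
    then have "m = 1" by (simp add: m_def)
    then have "real (c j) * real n powr (m - 1) = real (c j) powr 1"
      using c1[OF j] n by simp
    also have "\<dots> \<le> real (c j) powr r" by (rule powr_mono) (use True c1[OF j] in auto)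
    finally show ?thesis .
  next
    case False
    then have mr: "m = r" by (simp add: m_def)
    have "real n powr (r - 1) \<le> real (c j) powr (r - 1)"
      by (rule powr_mono2') (use False c1[OF j] cle[OF j] in auto)
    then have "real (c j) * real n powr (r - 1) \<le> real (c j) * real (c j) powr (r - 1)"
      by (rule mult_left_mono) simp
    also have "\<dots> = real (c j) powr 1 * real (c j) powr (r - 1)"
      using c1[OF j] by simp
    also have "\<dots> = real (c j) powr (1 + (r - 1))"
      by (simp only: powr_add)
    finally show ?thesis by (simp add: mr)
  qed
  have "real n powr m = real n powr (1 + (m - 1))" by simp
  also have "\<dots> = real n powr 1 * real n powr (m - 1)" by (simp only: powr_add)
  also have "\<dots> = real n * real n powr (m - 1)" by simp
  also have "\<dots> = (\<Sum>j\<in>J. real (c j) * real n powr (m - 1))"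
    by (simp add: sum_distrib_right[symmetric] cn[symmetric])
  also have "\<dots> \<le> (\<Sum>j\<in>J. real (c j) powr r)" by (rule sum_mono) (rule trm)
  finally show ?thesis by (simp add: m_def)
qed

lemma lower_bound:
  fixes p0 q0 :: real
  assumes p: "0 < p0" and q: "0 < q0" and x: "in_mixed (ereal q0) (ereal p0) x"
    and K: "finite K" "card K = n" "1 \<le> n" and x1: "\<And>k. k \<in> K \<Longrightarrow> 1 \<le> \<bar>x (fst k) (snd k)\<bar>"
  shows "real n powr (min (1/p0) (1/q0)) \<le> mixed_norm (ereal q0) (ereal p0) x"
proof -
  define J where "J = fst ` K"
  define Kj where "Kj j = {i. (j, i) \<in> K}" for j
  define c where "c j = card (Kj j)" for j
  define r where "r = q0 / p0"
  have r0: "0 < r" using p q by (simp add: r_def)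
  have fJ: "finite J" using K by (simp add: J_def)
  have fKj: "finite (Kj j)" for j
  proof -
    have "Kj j \<subseteq> snd ` K" by (force simp: Kj_def)
    then show ?thesis by (rule finite_subset) (use K in simp)
  qed
  have KS: "K = Sigma J Kj" by (force simp: J_def Kj_def)
  have cn: "(\<Sum>j\<in>J. c j) = n" using K fJ fKj by (simp add: KS c_def)
  have c1: "1 \<le> c j" if "j \<in> J" for j
  proof -
    from that obtain i where "(j, i) \<in> K" by (auto simp: J_def)
    then have "Kj j \<noteq> {}" by (auto simp: Kj_def)
    then show ?thesis using fKj[of j] by (simp add: c_def Suc_le_eq card_gt_0_iff)
  qed
  have sj: "summable (\<lambda>i. \<bar>x j i\<bar> powr p0)" for j using x by (simp add: in_mixed_fin)
  define a where "a j = lp_norm (ereal p0) (x j)" for j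
  have sa: "summable (\<lambda>j. a j powr q0)"
    using x by (simp add: in_mixed_fin lp_norm_nonneg_fin a_def)
  have ca: "real (c j) powr r \<le> a j powr q0" for j
  proof -
    have "real (c j) = (\<Sum>i\<in>Kj j. 1)" by (simp add: c_def)
    also have "\<dots> \<le> (\<Sum>i\<in>Kj j. \<bar>x j i\<bar> powr p0)"
    proof (rule sum_mono)
      fix i assume "i \<in> Kj j"
      then have "1 \<le> \<bar>x j i\<bar>" using x1[of "(j,i)"] by (simp add: Kj_def)
      then show "1 \<le> \<bar>x j i\<bar> powr p0" using p by (intro ge_one_powr_ge_zero) auto
    qed
    also have "\<dots> \<le> (\<Sum>i. \<bar>x j i\<bar> powr p0)"
      by (rule sum_le_suminf[OF sj fKj]) simp
    finally have le: "real (c j) \<le> (\<Sum>i. \<bar>x j i\<bar> powr p0)" .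
    have "real (c j) powr r = (real (c j) powr (1/p0)) powr q0"
      by (simp add: powr_powr r_def)
    also have "\<dots> \<le> a j powr q0"
      unfolding a_def lp_norm_fin
      by (intro powr_mono2 le) (use p q in auto)
    finally show ?thesis .
  qed
  have "real n powr (min 1 r) \<le> (\<Sum>j\<in>J. real (c j) powr r)"
    by (rule powr_sum_lower[OF fJ r0 c1 cn K(3)])
  also have "\<dots> \<le> (\<Sum>j\<in>J. a j powr q0)" by (rule sum_mono) (rule ca)
  also have "\<dots> \<le> (\<Sum>j. a j powr q0)" by (rule sum_le_suminf[OF sa fJ]) simp
  finally have le: "real n powr (min 1 r) \<le> (\<Sum>j. a j powr q0)" .
  have "real n powr (min (1/p0) (1/q0)) = (real n powr (min 1 r)) powr (1/q0)"
  proof -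
    have "min 1 r * (1/q0) = min (1/p0) (1/q0)"
      using p q by (auto simp: r_def min_def field_simps)
    then show ?thesis by (simp add: powr_powr)
  qed
  also have "\<dots> \<le> (\<Sum>j. a j powr q0) powr (1/q0)"
    by (intro powr_mono2 le) (use q in auto)
  also have "\<dots> = mixed_norm (ereal q0) (ereal p0) x"
    by (simp add: mixed_norm_fin a_def)
  finally show ?thesis .
qed



interpretation V: vector_space scl by (rule vector_space_scl)
interpretation VP: vector_space_pair scl scl by unfold_locales

lemma fun_sum_apply: "(\<Sum>a\<in>A. f a) x = (\<Sum>a\<in>A. f a x)"
  by (induction A rule: infinite_finite_induct) auto

definition restr :: "(nat \<times> nat) set \<Rightarrow> (nat \<Rightarrow> nat \<Rightarrow> real) \<Rightarrow> (nat \<Rightarrow> nat \<Rightarrow> real)" where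
  "restr K y = (\<lambda>j i. if (j, i) \<in> K then y j i else 0)"

definition delta :: "nat \<times> nat \<Rightarrow> (nat \<Rightarrow> nat \<Rightarrow> real)" where
  "delta k = (\<lambda>j i. if (j, i) = k then 1 else 0)"

lemma linear_restr: "Vector_Spaces.linear scl scl (restr K)"
  unfolding Vector_Spaces.linear_iff
  by (auto simp: vector_space_scl restr_def scl_def fun_eq_iff)

lemma restr_span: "finite K \<Longrightarrow> restr K y \<in> V.span (delta ` K)"
proof -
  assume K: "finite K"
  have "restr K y = (\<Sum>k\<in>K. scl (y (fst k) (snd k)) (delta k))"
  proof (rule ext, rule ext)
    fix j i
    have "(\<Sum>k\<in>K. scl (y (fst k) (snd k)) (delta k)) j i
        = (\<Sum>k\<in>K. y (fst k) (snd k) * (if (j, i) = k then 1 else 0))"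
      by (simp add: fun_sum_apply scl_def delta_def)
    also have "\<dots> = (\<Sum>k\<in>K. if (j, i) = k then y (fst k) (snd k) else 0)"
      by (rule sum.cong) auto
    also have "\<dots> = restr K y j i" using K by (simp add: restr_def)
    finally show "restr K y j i = (\<Sum>k\<in>K. scl (y (fst k) (snd k)) (delta k)) j i" by simp
  qed
  also have "\<dots> \<in> V.span (delta ` K)"
    by (intro V.span_sum V.span_scale V.span_base) auto
  finally show ?thesis .
qed

lemma exists_kernel:
  assumes Vs: "V.subspace V" and dim: "V.dim V = n" and K: "finite K" "card K < n"
  shows "\<exists>y\<in>V. y \<noteq> 0 \<and> (\<forall>k\<in>K. y (fst k) (snd k) = 0)"
proof (rule ccontr)
  assume "\<not> ?thesis"
  then have inj0: "\<forall>y\<in>V. restr K y = 0 \<longrightarrow> y = 0"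
    by (auto simp: restr_def fun_eq_iff)
  have inj: "inj_on (restr K) V"
    using VP.linear_inj_on_iff_eq_0[OF linear_restr Vs] inj0 by simp
  obtain B where B: "B \<subseteq> V" "V.independent B" "V \<subseteq> V.span B" "card B = V.dim V"
    by (rule V.basis_exists)
  have spB: "V.span B = V" by (rule V.span_subspace[OF B(1) B(3) Vs])
  have ind: "V.independent (restr K ` B)"
    by (rule VP.linear_independent_injective_image[OF linear_restr B(2)]) (use inj spB in simp)
  have sub: "restr K ` B \<subseteq> V.span (delta ` K)" using restr_span[OF K(1)] by auto
  have "finite (restr K ` B) \<and> card (restr K ` B) \<le> card (delta ` K)"
    by (rule V.independent_span_bound[OF _ ind sub]) (use K in simp)
  moreover have "card (restr K ` B) = card B"
    by (rule card_image) (rule inj_on_subset[OF inj B(1)])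
  moreover have "card (delta ` K) \<le> card K" by (rule card_image_le[OF K(1)])
  ultimately show False using B(4) dim K(2) by simp
qed



lemma step:
  fixes p0 q0 :: real
  assumes p: "0 < p0" and q: "0 < q0" and Vs: "V.subspace V"
    and VX: "\<And>v. v \<in> V \<Longrightarrow> in_mixed (ereal q0) (ereal p0) v"
    and dim: "V.dim V = n" and x: "x \<in> V" and xb: "\<And>k. \<bar>x (fst k) (snd k)\<bar> \<le> 1"
    and K: "finite K" "card K < n" and xK: "\<And>k. k \<in> K \<Longrightarrow> \<bar>x (fst k) (snd k)\<bar> = 1"
  shows "\<exists>x'\<in>V. \<exists>k0. k0 \<notin> K \<and> (\<forall>k. \<bar>x' (fst k) (snd k)\<bar> \<le> 1)
            \<and> (\<forall>k\<in>insert k0 K. \<bar>x' (fst k) (snd k)\<bar> = 1)"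
proof -
  obtain y where y: "y \<in> V" "y \<noteq> 0" "\<And>k. k \<in> K \<Longrightarrow> y (fst k) (snd k) = 0"
    using exists_kernel[OF Vs dim K] by blast
  obtain k1 where k1: "y (fst k1) (snd k1) \<noteq> 0"
    using y(2) by (auto simp: fun_eq_iff)
  have k1K: "k1 \<notin> K" using k1 y(3) by auto
  define X where "X k = x (fst k) (snd k)" for k
  define Y where "Y k = y (fst k) (snd k)" for k
  define E where "E = 2 / \<bar>Y k1\<bar>"
  have Epos: "0 < E" using k1 by (simp add: E_def Y_def)
  have EY: "E * \<bar>Y k1\<bar> = 2" using k1 by (simp add: E_def Y_def)
  define F where "F = {k. k \<notin> K \<and> 1 \<le> \<bar>X k\<bar> + E * \<bar>Y k\<bar>}"
  have fF: "finite F"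
  proof -
    have "F \<subseteq> {k. 1/2 \<le> \<bar>x (fst k) (snd k)\<bar>} \<union> {k. 1/(2*E) \<le> \<bar>y (fst k) (snd k)\<bar>}"
    proof
      fix k assume "k \<in> F"
      then have h: "1 \<le> \<bar>X k\<bar> + E * \<bar>Y k\<bar>" by (simp add: F_def)
      show "k \<in> {k. 1/2 \<le> \<bar>x (fst k) (snd k)\<bar>} \<union> {k. 1/(2*E) \<le> \<bar>y (fst k) (snd k)\<bar>}"
      proof (rule ccontr)
        assume "\<not> ?thesis"
        then have "\<bar>X k\<bar> < 1/2" "\<bar>Y k\<bar> < 1/(2*E)" by (auto simp: X_def Y_def)
        then have "E * \<bar>Y k\<bar> < E * (1/(2*E))" using Epos by (intro mult_strict_left_mono) auto
        then have "E * \<bar>Y k\<bar> < 1/2" using Epos by simp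
        with h \<open>\<bar>X k\<bar> < 1/2\<close> show False by simp
      qed
    qed
    moreover have "finite {k. 1/2 \<le> \<bar>x (fst k) (snd k)\<bar>}"
      by (rule c0_prop[OF p q VX[OF x]]) simp
    moreover have "finite {k. 1/(2*E) \<le> \<bar>y (fst k) (snd k)\<bar>}"
      by (rule c0_prop[OF p q VX[OF y(1)]]) (use Epos in simp)
    ultimately show ?thesis by (meson finite_Un finite_subset)
  qed
  have xb': "\<bar>X k\<bar> \<le> 1" for k using xb by (simp add: X_def)
  have k1F: "k1 \<in> F" using k1K EY xb'[of k1] by (simp add: F_def)
  define H where "H = (\<Union>k\<in>F. {0..E} \<inter> {e. 1 \<le> \<bar>X k + e * Y k\<bar>})"
  have cH: "closed H" unfolding H_def
  proof (intro closed_UN fF ballI closed_Int closed_atLeastAtMost)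
    fix k
    show "closed {e. 1 \<le> \<bar>X k + e * Y k\<bar>}"
      by (rule closed_Collect_le) (auto intro!: continuous_intros)
  qed
  have EH: "E \<in> H"
  proof -
    have "\<bar>E * Y k1\<bar> - \<bar>X k1\<bar> \<le> \<bar>X k1 + E * Y k1\<bar>" by linarith
    then have "1 \<le> \<bar>X k1 + E * Y k1\<bar>" using EY xb'[of k1] Epos by (simp add: abs_mult)
    then show ?thesis using k1F Epos unfolding H_def by auto
  qed
  have bH: "bdd_below H" unfolding H_def by (rule bdd_belowI[of _ 0]) auto
  define e where "e = Inf H"
  have eH: "e \<in> H" unfolding e_def by (rule closed_contains_Inf) (use EH bH cH in auto)
  have emin: "e \<le> e'" if "e' \<in> H" for e' unfolding e_def by (rule cInf_lower[OF that bH])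
  from eH obtain k0 where k0: "k0 \<in> F" "0 \<le> e" "e \<le> E" "1 \<le> \<bar>X k0 + e * Y k0\<bar>"
    unfolding H_def by auto
  have le1: "\<bar>X k + e * Y k\<bar> \<le> 1" if kK: "k \<notin> K" for k
  proof (cases "k \<in> F")
    case False
    then have "\<bar>X k\<bar> + E * \<bar>Y k\<bar> < 1" using kK by (simp add: F_def)
    moreover have "\<bar>X k + e * Y k\<bar> \<le> \<bar>X k\<bar> + e * \<bar>Y k\<bar>"
      using k0(2) by (simp add: abs_mult abs_triangle_ineq[THEN order_trans])
    moreover have "e * \<bar>Y k\<bar> \<le> E * \<bar>Y k\<bar>" using k0(3) by (simp add: mult_right_mono)
    ultimately show ?thesis by simp
  next
    case True
    show ?thesis
    proof (rule ccontr)
      assume gt: "\<not> ?thesis"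
      have "\<exists>t. 0 \<le> t \<and> t \<le> e \<and> \<bar>X k + t * Y k\<bar> = 1"
        by (rule IVT'[of "\<lambda>t. \<bar>X k + t * Y k\<bar>"])
           (use gt xb'[of k] k0(2) in \<open>auto intro!: continuous_intros\<close>)
      then obtain t where t: "0 \<le> t" "t \<le> e" "\<bar>X k + t * Y k\<bar> = 1" by blast
      have "t \<in> H" using t True k0(3) unfolding H_def by (auto intro!: bexI[of _ k])
      then have "e \<le> t" by (rule emin)
      with t have "t = e" by simp
      with t(3) gt show False by simp
    qed
  qed
  define x' where "x' = x + scl e y"
  have x'V: "x' \<in> V" unfolding x'_def
    using Vs x y(1) by (simp add: V.subspace_def)
  have x'e: "x' (fst k) (snd k) = X k + e * Y k" for k by (simp add: x'_def scl_def X_def Y_def)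
  have k0K: "k0 \<notin> K" using k0(1) by (simp add: F_def)
  have YK: "Y k = 0" if "k \<in> K" for k using y(3)[OF that] by (simp add: Y_def)
  show ?thesis
  proof (intro bexI[OF _ x'V] exI[of _ k0] conjI allI ballI k0K)
    fix k
    show "\<bar>x' (fst k) (snd k)\<bar> \<le> 1"
      by (cases "k \<in> K") (use YK xb' le1 in \<open>auto simp: x'e\<close>)
  next
    fix k assume kk: "k \<in> insert k0 K"
    show "\<bar>x' (fst k) (snd k)\<bar> = 1"
    proof (cases "k = k0")
      case True
      then show ?thesis using le1[OF k0K] k0(4) by (simp add: x'e)
    next
      case False
      then have "k \<in> K" using kk by simp
      then show ?thesis using YK[of k] xK[of k] by (simp add: x'e X_def)
    qed
  qed
qed

lemma iterate:
  fixes p0 q0 :: real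
  assumes p: "0 < p0" and q: "0 < q0" and Vs: "V.subspace V"
    and VX: "\<And>v. v \<in> V \<Longrightarrow> in_mixed (ereal q0) (ereal p0) v"
    and dim: "V.dim V = n"
  shows "r \<le> n \<Longrightarrow> \<exists>x\<in>V. \<exists>K. finite K \<and> card K = r \<and> (\<forall>k. \<bar>x (fst k) (snd k)\<bar> \<le> 1)
            \<and> (\<forall>k\<in>K. \<bar>x (fst k) (snd k)\<bar> = 1)"
proof (induction r)
  case 0
  have "0 \<in> V" using Vs by (simp add: V.subspace_def)
  then show ?case by (intro bexI[of _ 0] exI[of _ "{}"]) auto
next
  case (Suc r)
  then obtain x K where xK: "x \<in> V" "finite K" "card K = r" "\<forall>k. \<bar>x (fst k) (snd k)\<bar> \<le> 1"
      "\<forall>k\<in>K. \<bar>x (fst k) (snd k)\<bar> = 1" by auto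
  obtain x' k0 where x': "x' \<in> V" "k0 \<notin> K" "\<forall>k. \<bar>x' (fst k) (snd k)\<bar> \<le> 1"
      "\<forall>k\<in>insert k0 K. \<bar>x' (fst k) (snd k)\<bar> = 1"
    using step[OF p q Vs VX dim xK(1) _ xK(2) _ ] xK Suc.prems by (metis Suc_le_lessD)
  show ?case
    by (intro bexI[OF _ x'(1)] exI[of _ "insert k0 K"]) (use x' xK in auto)
qed



lemma delta_eval: "delta k' (fst k) (snd k) = (if k' = k then 1 else 0)"
  by (cases k; cases k') (auto simp: delta_def)

lemma delta_inj: "inj delta"
proof (rule injI)
  fix a b assume "delta a = delta b"
  then have "delta a (fst a) (snd a) = delta b (fst a) (snd a)" by simp
  then show "a = b" by (simp add: delta_eval split: if_splits)
qed

lemma delta_indep: "V.independent (delta ` K)"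
  unfolding V.independent_explicit_module
proof (intro allI impI)
  fix t u v
  assume t: "finite t" "t \<subseteq> delta ` K" "(\<Sum>v\<in>t. scl (u v) v) = 0" "v \<in> t"
  then obtain k where vk: "v = delta k" by auto
  have ev: "w (fst k) (snd k) = (if w = v then 1 else 0)" if "w \<in> t" for w
  proof -
    from that t(2) obtain k' where "w = delta k'" by auto
    then show ?thesis using vk delta_inj by (auto simp: delta_eval inj_eq)
  qed
  have "0 = (\<Sum>w\<in>t. scl (u w) w) (fst k) (snd k)" using t(3) by simp
  also have "\<dots> = (\<Sum>w\<in>t. u w * w (fst k) (snd k))" by (simp add: fun_sum_apply scl_def)
  also have "\<dots> = (\<Sum>w\<in>t. if v = w then u w else 0)" by (rule sum.cong) (auto simp: ev)
  also have "\<dots> = u v" using t(1) t(4) by simp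
  finally show "u v = 0" by simp
qed

definition V0 :: "nat \<Rightarrow> (nat \<Rightarrow> nat \<Rightarrow> real) set" where
  "V0 n = {x. \<forall>j i. (j \<noteq> 0 \<or> n \<le> i) \<longrightarrow> x j i = 0}"

lemma V0_subspace: "V.subspace (V0 n)"
  by (auto simp: V.subspace_def V0_def scl_def)

lemma V0_in: 
  assumes "x \<in> V0 n"
  shows "in_mixed (ereal q) (ereal p) x"
proof -
  have z: "x j i = 0" if "j \<noteq> 0 \<or> n \<le> i" for j i using assms that by (auto simp: V0_def)
  have s1: "summable (\<lambda>i. \<bar>x j i\<bar> powr p)" for j
    by (rule summable_finite[of "{..<n}"]) (auto simp: z)
  have "lp_norm (ereal p) (x j) = 0" if "j \<noteq> 0" for j using that by (simp add: lp_norm_fin z)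
  then have s2: "summable (\<lambda>j. \<bar>lp_norm (ereal p) (x j)\<bar> powr q)"
    by (intro summable_finite[of "{0}"]) auto
  show ?thesis using s1 s2 by (simp add: in_mixed_fin)
qed

lemma V0_dim: "V.dim (V0 n) = n"
proof -
  define K0 where "K0 = (\<lambda>i. (0::nat, i)) ` {..<n}"
  have fK0: "finite K0" by (simp add: K0_def)
  have cK0: "card K0 = n" unfolding K0_def by (subst card_image) (auto simp: inj_on_def)
  show ?thesis
  proof (rule V.dim_unique[of "delta ` K0"])
    show "delta ` K0 \<subseteq> V0 n" by (auto simp: K0_def V0_def delta_def)
    show "V0 n \<subseteq> V.span (delta ` K0)"
    proof
      fix x assume x: "x \<in> V0 n"
      have "restr K0 x j i = x j i" for j i
      proof (cases "j = 0 \<and> i < n")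
        case True
        then have "(j, i) \<in> K0" by (auto simp: K0_def)
        then show ?thesis by (simp add: restr_def)
      next
        case False
        then have "x j i = 0" using x by (auto simp: V0_def)
        then show ?thesis by (simp add: restr_def)
      qed
      then have "restr K0 x = x" by (simp add: fun_eq_iff)
      then show "x \<in> V.span (delta ` K0)" using restr_span[OF fK0, of x] by simp
    qed
    show "V.independent (delta ` K0)" by (rule delta_indep)
    show "card (delta ` K0) = n" using cK0 delta_inj by (simp add: card_image inj_on_subset)
  qed
qed



lemma unit_abs_le1:
  assumes p: "0 < p0" and q: "0 < q0" and z: "in_mixed (ereal q0) (ereal p0) z"
    and n1: "mixed_norm (ereal q0) (ereal p0) z = 1"
  shows "\<bar>z j i\<bar> \<le> 1"
proof -
  have sj: "summable (\<lambda>i. \<bar>z j i\<bar> powr p0)" for j using z by (simp add: in_mixed_fin)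
  have sa: "summable (\<lambda>j. \<bar>lp_norm (ereal p0) (z j)\<bar> powr q0)"
    using z by (simp add: in_mixed_fin)
  have "\<bar>z j i\<bar> \<le> lp_norm (ereal p0) (z j)" by (rule abs_le_lp[OF p sj])
  also have "\<dots> \<le> \<bar>lp_norm (ereal p0) (z j)\<bar>" by simp
  also have "\<dots> \<le> lp_norm (ereal q0) (\<lambda>j. lp_norm (ereal p0) (z j))"
    by (rule abs_le_lp[OF q sa])
  also have "\<dots> = 1" using n1 by (simp add: mixed_norm_def)
  finally show ?thesis .
qed

lemma main_bound:
  fixes p0 q0 :: real and p1 q1 :: ereal
  assumes p: "0 < p0" "ereal p0 < p1" and q: "0 < q0" "ereal q0 < q1"
    and n: "1 \<le> n" and Vs: "V.subspace V"
    and VX: "V \<subseteq> Collect (in_mixed (ereal q0) (ereal p0))" and dim: "V.dim V = n"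
  shows "(INF x \<in> {x \<in> V. mixed_norm (ereal q0) (ereal p0) x = 1}. ereal (mixed_norm q1 p1 (id x)))
    \<le> ereal (real n powr (- (min (1 / p0) (1 / q0)
                 * (1 - max (real_of_ereal (ereal q0 / q1)) (real_of_ereal (ereal p0 / p1))))))"
proof -
  define \<theta> where "\<theta> = max (real_of_ereal (ereal q0 / q1)) (real_of_ereal (ereal p0 / p1))"
  define m where "m = min (1 / p0) (1 / q0)"
  have th: "0 \<le> \<theta>" "\<theta> < 1"
    using ratio_bounds[OF p] ratio_bounds[OF q] by (auto simp: \<theta>_def)
  have VX': "\<And>v. v \<in> V \<Longrightarrow> in_mixed (ereal q0) (ereal p0) v" using VX by auto
  obtain x K where xK: "x \<in> V" "finite K" "card K = n" "\<forall>k. \<bar>x (fst k) (snd k)\<bar> \<le> 1"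
      "\<forall>k\<in>K. \<bar>x (fst k) (snd k)\<bar> = 1"
    using iterate[OF p(1) q(1) Vs VX' dim, of n] by auto
  define N where "N = mixed_norm (ereal q0) (ereal p0) x"
  have xX: "in_mixed (ereal q0) (ereal p0) x" using VX' xK(1) .
  have lb: "real n powr m \<le> N"
    unfolding N_def m_def by (rule lower_bound[OF p(1) q(1) xX xK(2) xK(3) n]) (use xK(5) in simp)
  have npos: "0 < real n powr m" using n by simp
  then have Npos: "0 < N" using lb by linarith
  define z where "z = scl (1 / N) x"
  have zV: "z \<in> V" using Vs xK(1) by (simp add: z_def V.subspace_def)
  have zX: "in_mixed (ereal q0) (ereal p0) z" using VX' zV .
  have z1: "mixed_norm (ereal q0) (ereal p0) z = 1"
    using mixed_hom[OF p(1) q(1) xX, of "1/N"] Npos by (simp add: z_def N_def)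
  have zb: "\<bar>z j i\<bar> \<le> 1 / N" for j i
    using xK(4)[rule_format, of "(j,i)"] Npos by (simp add: z_def scl_def abs_mult divide_right_mono)
  have yb: "mixed_norm q1 p1 z \<le> (1/N) powr (1 - \<theta>)"
    using ybound[OF p q zX z1 _ zb] Npos by (simp add: \<theta>_def)
  have "(1/N) powr (1 - \<theta>) \<le> (real n powr (-m)) powr (1 - \<theta>)"
  proof (rule powr_mono2)
    show "1 / N \<le> real n powr - m"
      using lb npos by (simp add: powr_minus_divide frac_le)
  qed (use th Npos in auto)
  also have "\<dots> = real n powr (- (m * (1 - \<theta>)))" by (simp add: powr_powr)
  finally have "mixed_norm q1 p1 z \<le> real n powr (- (m * (1 - \<theta>)))" using yb by simp
  then have "ereal (mixed_norm q1 p1 (id z)) \<le> ereal (real n powr (- (m * (1 - \<theta>))))" by simp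
  moreover have "(INF x \<in> {x \<in> V. mixed_norm (ereal q0) (ereal p0) x = 1}. ereal (mixed_norm q1 p1 (id x)))
     \<le> ereal (mixed_norm q1 p1 (id z))"
    by (rule INF_lower) (use zV z1 in simp)
  ultimately show ?thesis unfolding m_def \<theta>_def by (rule order_trans[rotated])
qed

lemma bern_nonneg:
  fixes p0 q0 :: real and p1 q1 :: ereal
  assumes p: "0 < p0" "ereal p0 < p1" and q: "0 < q0" "ereal q0 < q1"
  shows "0 \<le> bernstein (in_mixed (ereal q0) (ereal p0)) (mixed_norm (ereal q0) (ereal p0))
                     (mixed_norm q1 p1) id n"
proof -
  have inset: "V0 n \<in> {V. module.subspace scl V \<and> V \<subseteq> Collect (in_mixed (ereal q0) (ereal p0))
        \<and> vector_space.dim scl V = n}"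
    using V0_subspace V0_dim V0_in by auto
  have "0 \<le> (INF x \<in> {x \<in> V0 n. mixed_norm (ereal q0) (ereal p0) x = 1}. ereal (mixed_norm q1 p1 (id x)))"
  proof (rule INF_greatest)
    fix x assume x: "x \<in> {x \<in> V0 n. mixed_norm (ereal q0) (ereal p0) x = 1}"
    then have xX: "in_mixed (ereal q0) (ereal p0) x" and x1: "mixed_norm (ereal q0) (ereal p0) x = 1"
      using V0_in by auto
    have "0 \<le> mixed_norm q1 p1 x"
      using ybound[OF p q xX x1, of 1] unit_abs_le1[OF p(1) q(1) xX x1] by simp
    then show "0 \<le> ereal (mixed_norm q1 p1 (id x))" by simp
  qed
  also have "\<dots> \<le> bernstein (in_mixed (ereal q0) (ereal p0)) (mixed_norm (ereal q0) (ereal p0))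
                     (mixed_norm q1 p1) id n"
    unfolding bernstein_def by (rule SUP_upper[OF inset])
  finally show ?thesis .
qed

theorem proposition3p5:
  fixes p0 q0 :: real and p1 q1 :: ereal
  assumes "0 < p0" "ereal p0 < p1" "0 < q0" "ereal q0 < q1"
  shows "(\<forall>n::nat. n \<ge> 1 \<longrightarrow>
           bernstein (in_mixed (ereal q0) (ereal p0)) (mixed_norm (ereal q0) (ereal p0))
                     (mixed_norm q1 p1) id n
           \<le> ereal (real n powr (- (min (1 / p0) (1 / q0)
                 * (1 - max (real_of_ereal (ereal q0 / q1)) (real_of_ereal (ereal p0 / p1)))))))
       \<and> (\<lambda>n. bernstein (in_mixed (ereal q0) (ereal p0)) (mixed_norm (ereal q0) (ereal p0))
                     (mixed_norm q1 p1) id n) \<longlonglongrightarrow> 0"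
proof -
  define g where "g n = ereal (real n powr (- (min (1 / p0) (1 / q0)
                 * (1 - max (real_of_ereal (ereal q0 / q1)) (real_of_ereal (ereal p0 / p1))))))" for n :: nat
  define b where "b n = bernstein (in_mixed (ereal q0) (ereal p0)) (mixed_norm (ereal q0) (ereal p0))
                     (mixed_norm q1 p1) id n" for n
  have up: "\<forall>n::nat. n \<ge> 1 \<longrightarrow> b n \<le> g n"
  proof (intro allI impI)
    fix n :: nat assume n: "n \<ge> 1"
    show "b n \<le> g n" unfolding b_def bernstein_def g_def
      by (rule SUP_least) (use main_bound[OF assms n] in auto)
  qed
  have gpos: "0 < min (1 / p0) (1 / q0)
                 * (1 - max (real_of_ereal (ereal q0 / q1)) (real_of_ereal (ereal p0 / p1)))"
    using ratio_bounds[OF assms(1,2)] ratio_bounds[OF assms(3,4)] assms(1,3) by simp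
  have "(\<lambda>n. real n powr (- (min (1 / p0) (1 / q0)
                 * (1 - max (real_of_ereal (ereal q0 / q1)) (real_of_ereal (ereal p0 / p1)))))) \<longlonglongrightarrow> 0"
    by (rule tendsto_neg_powr) (use gpos filterlim_real_sequentially in auto)
  then have g0: "g \<longlonglongrightarrow> 0" unfolding g_def zero_ereal_def by (rule tendsto_ereal)
  have "b \<longlonglongrightarrow> 0"
  proof (rule tendsto_sandwich[OF _ _ tendsto_const g0])
    show "eventually (\<lambda>n. 0 \<le> b n) sequentially"
      using bern_nonneg[OF assms] by (simp add: b_def)
    show "eventually (\<lambda>n. b n \<le> g n) sequentially"
      using up by (auto simp: eventually_sequentially)
  qed
  then show ?thesis using up by (simp add: b_def[abs_def] g_def)
qed

end
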